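(* Suppose $D\subset\mathbb{R}^d$ is a $\kappa$-fat open set with localization constant $R_0$ and $\dim_{\rm A}(\partial D)<d$, and let $\gamma:=d-\dim_{\rm A}(\partial D)$. For any $q\in[0,\gamma)$ there exists $C=C(q)>0$ such that $$m_d\big(\{y\in B(x,r)\cap\overline D:\delta_D(y)<s\}\big)\le Cs^q(s\vee r)^{d-q}\quad\text{for all }x\in\overline D\text{ and }r,s>0.$$
   Context: $m_d$ is $d$-dimensional Lebesgue measure; $\delta_D(x)=\mathrm{dist}(x,\partial D)$. For nonempty $E\subset\mathbb{R}^d$, $\dim_{\rm A}(E)$ is the infimum of all $\lambda>0$ for which there is $C$ such that for all $x\in E$ and $0<s\le r<\mathrm{diam}(E)$, $B(x,r)\cap E$ can be covered by at most $C(r/s)^\lambda$ open balls of radius $s$ centered in $E$. For $\kappa\in(0,1)$, $D$ open is $\kappa$-fat with localization constant $R_0\in(0,\mathrm{diam}(D)]$ if for every $x\in\overline D$ and $r\in(0,R_0)$ there is $z\in D$ with $B(z,\kappa r)\subset D\cap B(x,r)$. *)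

theory Defs
  imports "HOL-Analysis.Analysis"
begin

text \<open>Covering condition in the definition of the Assouad dimension: there is C such
  that for all x in E and 0 < s <= r < diam E, the set B(x,r) \<inter> E can be covered by at most
  C (r/s)^lambda open balls of radius s centred in E.  (For unbounded E, diam E = infinity,
  so the restriction r < diam E is void.)\<close>
definition assouad_cover :: "'a::metric_space set \<Rightarrow> real \<Rightarrow> bool" where
  "assouad_cover E lam \<longleftrightarrow>
     (\<exists>C. \<forall>x\<in>E. \<forall>s r. 0 < s \<and> s \<le> r \<and> (bounded E \<longrightarrow> r < diameter E) \<longrightarrow>
        (\<exists>F. finite F \<and> F \<subseteq> E \<and> ball x r \<inter> E \<subseteq> (\<Union>y\<in>F. ball y s) \<and>
             real (card F) \<le> C * (r / s) powr lam))"

definition assouad_dim :: "'a::metric_space set \<Rightarrow> real" where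
  "assouad_dim E = Inf {lam. lam > 0 \<and> assouad_cover E lam}"

definition kappa_fat :: "real \<Rightarrow> real \<Rightarrow> 'a::euclidean_space set \<Rightarrow> bool" where
  "kappa_fat \<kappa> R0 D \<longleftrightarrow> open D \<and> 0 < \<kappa> \<and> \<kappa> < 1 \<and> 0 < R0 \<and>
     (bounded D \<longrightarrow> R0 \<le> diameter D) \<and>
     (\<forall>x\<in>closure D. \<forall>r. 0 < r \<and> r < R0 \<longrightarrow>
        (\<exists>z\<in>D. ball z (\<kappa> * r) \<subseteq> D \<inter> ball x r))"

end

theory Submission
  imports Defs
begin

definition omega :: "'a::euclidean_space itself \<Rightarrow> real" where
  "omega _ = measure lebesgue (ball (0::'a) 1)"

lemma emeas_unit_fin: "emeasure lebesgue (ball (0::'a::euclidean_space) 1) = ennreal (omega TYPE('a))"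
proof -
  have "emeasure lebesgue (ball (0::'a) 1) = emeasure lborel (ball (0::'a) 1)"
    by (simp add: emeasure_completion)
  then have "emeasure lebesgue (ball (0::'a) 1) < \<infinity>" using emeasure_lborel_ball_finite by metis
  then show ?thesis unfolding omega_def by (simp add: emeasure_eq_ennreal_measure)
qed

lemma omega_pos: "omega TYPE('a::euclidean_space) > 0"
proof -
  have "measure lborel (ball (0::'a) 1) > 0" using content_ball_pos[of 1 "0::'a"] by simp
  then show ?thesis unfolding omega_def by (simp add: measure_completion)
qed

lemma evol: fixes c :: "'a::euclidean_space" assumes "r \<ge> 0"
  shows "emeasure lebesgue (ball c r) = ennreal (r ^ DIM('a) * omega TYPE('a))"
  using emeasure_lebesgue_ball_conv_unit_ball[OF assms, of c] emeas_unit_fin[where 'a='a]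
  by (simp add: ennreal_mult' assms)

lemma mvol: fixes c :: "'a::euclidean_space" assumes "r \<ge> 0"
  shows "measure lebesgue (ball c r) = r ^ DIM('a) * omega TYPE('a)"
  using evol[OF assms, of c] omega_pos[where 'a='a] assms
  by (simp add: measure_def)

lemma ebf: "emeasure lebesgue (ball (c::'a::euclidean_space) r) \<noteq> \<infinity>"
proof -
  have "emeasure lebesgue (ball c r) = emeasure lborel (ball c r)"
    by (simp add: emeasure_completion)
  then show ?thesis using emeasure_lborel_ball_finite[of c r] by simp
qed

lemma sep_card:
  fixes x :: "'a::euclidean_space"
  assumes "finite F" "F \<subseteq> ball x r" "0 < s" "0 < r"
    and sep: "\<And>a b. a \<in> F \<Longrightarrow> b \<in> F \<Longrightarrow> a \<noteq> b \<Longrightarrow> s \<le> dist a b"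
  shows "real (card F) * (s/2) ^ DIM('a) \<le> (r + s/2) ^ DIM('a)"
proof (cases "F = {}")
  case True then show ?thesis using assms by simp
next
  case False
  then obtain a where "a \<in> F" by auto
  with assms have r0: "0 < r" by auto
  let ?w = "omega TYPE('a)"
  have disj: "disjoint_family_on (\<lambda>a. ball a (s/2)) F"
    unfolding disjoint_family_on_def
  proof (intro ballI impI)
    fix a b assume ab: "a \<in> F" "b \<in> F" "a \<noteq> b"
    show "ball a (s/2) \<inter> ball b (s/2) = {}"
    proof (rule ccontr)
      assume "ball a (s/2) \<inter> ball b (s/2) \<noteq> {}"
      then obtain z where "dist a z < s/2" "dist b z < s/2" by auto
      then have "dist a b < s" using dist_triangle[of a b z] dist_commute[of b z] by linarith
      with sep[OF ab] show False by simp
    qed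
  qed
  have sub: "(\<Union>a\<in>F. ball a (s/2)) \<subseteq> ball x (r + s/2)"
  proof
    fix z assume "z \<in> (\<Union>a\<in>F. ball a (s/2))"
    then obtain a where "a \<in> F" "dist a z < s/2" by auto
    with assms(2) have "dist x a < r" by auto
    with \<open>dist a z < s/2\<close> show "z \<in> ball x (r + s/2)"
      using dist_triangle[of x z a] by simp
  qed
  have "measure lebesgue (\<Union>a\<in>F. ball a (s/2)) = (\<Sum>a\<in>F. measure lebesgue (ball a (s/2)))"
    apply (rule measure_finite_Union[OF assms(1) _ disj])
    using ebf by auto
  also have "\<dots> = real (card F) * ((s/2) ^ DIM('a) * ?w)"
    using mvol[where 'a='a, of "s/2"] assms(3) by simp
  finally have eq: "measure lebesgue (\<Union>a\<in>F. ball a (s/2)) = real (card F) * ((s/2) ^ DIM('a) * ?w)" .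
  have "measure lebesgue (\<Union>a\<in>F. ball a (s/2)) \<le> measure lebesgue (ball x (r + s/2))"
    apply (rule measure_mono_fmeasurable[OF sub])
     apply (auto intro!: sets.finite_UN assms(1))[1]
    unfolding fmeasurable_def using ebf[of x "r + s/2"] by (simp add: less_top)
  also have "\<dots> = (r + s/2) ^ DIM('a) * ?w" using mvol[where 'a='a] r0 assms(3) by simp
  finally have "real (card F) * (s/2) ^ DIM('a) * ?w \<le> (r + s/2) ^ DIM('a) * ?w"
    using eq by (simp add: mult.assoc)
  then show ?thesis using omega_pos[where 'a='a] by simp
qed

lemma doubling:
  fixes E :: "'a::euclidean_space set"
  assumes "0 < s" "s \<le> r"
  shows "\<exists>F. finite F \<and> F \<subseteq> E \<and> ball x r \<inter> E \<subseteq> (\<Union>y\<in>F. ball y s) \<and>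
             real (card F) \<le> (3 * r / s) ^ DIM('a)"
proof -
  define P where "P F \<longleftrightarrow> finite F \<and> F \<subseteq> ball x r \<inter> E \<and>
      (\<forall>a\<in>F. \<forall>b\<in>F. a \<noteq> b \<longrightarrow> s \<le> dist a b)" for F
  have r0: "0 < r" using assms by simp
  have bnd: "real (card F) \<le> (3 * r / s) ^ DIM('a)" if "P F" for F
  proof -
    have "real (card F) * (s/2) ^ DIM('a) \<le> (r + s/2) ^ DIM('a)"
      using that r0 assms(1) unfolding P_def by (intro sep_card[of F x r s]) auto
    also have "\<dots> \<le> (3 * r / 2) ^ DIM('a)"
      using assms by (intro power_mono) auto
    finally have "real (card F) * (s/2) ^ DIM('a) \<le> (3 * r / 2) ^ DIM('a)" .
    moreover have "(3 * r / 2) ^ DIM('a) = (3 * r / s) ^ DIM('a) * (s/2) ^ DIM('a)"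
      using assms by (simp add: power_mult_distrib[symmetric])
    ultimately show ?thesis using assms(1) by simp
  qed
  have "P {}" unfolding P_def by simp
  moreover have "\<forall>F. P F \<longrightarrow> card F < nat \<lfloor>(3 * r / s) ^ DIM('a)\<rfloor> + 1"
  proof (intro allI impI)
    fix F assume "P F"
    from bnd[OF this] have "real (card F) \<le> (3 * r / s) ^ DIM('a)" .
    then have "card F \<le> nat \<lfloor>(3 * r / s) ^ DIM('a)\<rfloor>"
      by (metis floor_mono floor_of_nat nat_int nat_mono)
    then show "card F < nat \<lfloor>(3 * r / s) ^ DIM('a)\<rfloor> + 1" by simp
  qed
  ultimately obtain F where F: "P F" and mx: "\<And>G. P G \<Longrightarrow> card G \<le> card F"
    using ex_has_greatest_nat[of P "{}" card] by blast
  have cov: "ball x r \<inter> E \<subseteq> (\<Union>y\<in>F. ball y s)"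
  proof
    fix a assume a: "a \<in> ball x r \<inter> E"
    show "a \<in> (\<Union>y\<in>F. ball y s)"
    proof (rule ccontr)
      assume na: "a \<notin> (\<Union>y\<in>F. ball y s)"
      then have "a \<notin> F" using assms(1) by force
      have "P (insert a F)"
        using F a na unfolding P_def by (auto simp: dist_commute not_less)
      then have "card (insert a F) \<le> card F" by (rule mx)
      moreover have "card (insert a F) = Suc (card F)"
        using F \<open>a \<notin> F\<close> unfolding P_def by simp
      ultimately show False by simp
    qed
  qed
  show ?thesis
    using F cov bnd[OF F] unfolding P_def by blast
qed

lemma cover_dim: "assouad_cover (E :: 'a::euclidean_space set) (real DIM('a))"
  unfolding assouad_cover_def
proof (intro exI[of _ "3 ^ DIM('a)"] ballI allI impI)
  fix x s r assume h: "x \<in> E" "0 < s \<and> s \<le> r \<and> (bounded E \<longrightarrow> r < diameter E)"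
  then obtain F where F: "finite F" "F \<subseteq> E" "ball x r \<inter> E \<subseteq> (\<Union>y\<in>F. ball y s)"
    "real (card F) \<le> (3 * r / s) ^ DIM('a)" using doubling[of s r E x] by auto
  have "(3 * r / s) ^ DIM('a) = 3 ^ DIM('a) * (r / s) powr real DIM('a)"
    using h by (simp add: powr_realpow power_mult_distrib[symmetric])
  with F show "\<exists>F. finite F \<and> F \<subseteq> E \<and> ball x r \<inter> E \<subseteq> (\<Union>y\<in>F. ball y s) \<and>
             real (card F) \<le> 3 ^ DIM('a) * (r / s) powr real DIM('a)" by auto
qed

lemma global_cover:
  fixes E :: "'a::euclidean_space set"
  assumes ac: "assouad_cover E lam" and lam: "0 < lam"
  shows "\<exists>C'>0. \<forall>w\<in>E. \<forall>s \<rho>. 0 < s \<and> s \<le> \<rho> \<longrightarrow>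
     (\<exists>F. finite F \<and> F \<subseteq> E \<and> ball w \<rho> \<inter> E \<subseteq> (\<Union>y\<in>F. ball y s) \<and>
          real (card F) \<le> C' * (\<rho> / s) powr lam)"
proof -
  from ac obtain C where Call: "\<forall>x\<in>E. \<forall>s r. 0 < s \<and> s \<le> r \<and> (bounded E \<longrightarrow> r < diameter E) \<longrightarrow>
        (\<exists>F. finite F \<and> F \<subseteq> E \<and> ball x r \<inter> E \<subseteq> (\<Union>y\<in>F. ball y s) \<and>
             real (card F) \<le> C * (r / s) powr lam)"
    unfolding assouad_cover_def by (elim exE) 
  note C = Call[rule_format]
  define C0 where "C0 = max C 0"
  define C' where "C' = 1 + 9 ^ DIM('a) * (C0 + 1)"
  have C0: "C \<le> C0" "0 \<le> C0" unfolding C0_def by auto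
  have C'pos: "C' > 0" "1 \<le> C'" "C0 \<le> C'" "9 ^ DIM('a) * (C0 + 1) \<le> C'"
  proof -
    have a: "1 \<le> (9::real) ^ DIM('a)" by simp
    have "C0 + 1 \<le> 9 ^ DIM('a) * (C0 + 1)" using a C0 by (simp add: mult_le_cancel_right1)
    then show "C' > 0" "1 \<le> C'" "C0 \<le> C'" "9 ^ DIM('a) * (C0 + 1) \<le> C'"
      unfolding C'_def using C0 by linarith+
  qed
  show ?thesis
  proof (intro exI[of _ C'] conjI C'pos(1) ballI allI impI)
    fix w and s \<rho> :: real assume w: "w \<in> E" and s: "0 < s \<and> s \<le> \<rho>"
    have q1: "1 \<le> \<rho> / s" using s by simp
    have pw1: "1 \<le> (\<rho> / s) powr lam" using q1 lam by (simp add: ge_one_powr_ge_zero)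
    show "\<exists>F. finite F \<and> F \<subseteq> E \<and> ball w \<rho> \<inter> E \<subseteq> (\<Union>y\<in>F. ball y s) \<and>
          real (card F) \<le> C' * (\<rho> / s) powr lam"
    proof (cases "bounded E \<longrightarrow> \<rho> < diameter E")
      case True
      then obtain F where F: "finite F" "F \<subseteq> E" "ball w \<rho> \<inter> E \<subseteq> (\<Union>y\<in>F. ball y s)"
        "real (card F) \<le> C * (\<rho> / s) powr lam"
        using C[OF w conjI[OF conjunct1[OF s] conjI[OF conjunct2[OF s] True]]] by blast
      have "C * (\<rho> / s) powr lam \<le> C' * (\<rho> / s) powr lam"
        using C0 C'pos by (intro mult_right_mono) auto
      with F show ?thesis by force
    next
      case False
      then have bE: "bounded E" and rd: "diameter E \<le> \<rho>" by auto
      have dE: "dist a b \<le> diameter E" if "a \<in> E" "b \<in> E" for a b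
        using diameter_bounded_bound[OF bE that] .
      show ?thesis
      proof (cases "diameter E = 0")
        case True
        have "E \<subseteq> {w}"
        proof
          fix z assume "z \<in> E" then have "dist w z \<le> 0" using dE[OF w] True by simp
          then show "z \<in> {w}" by simp
        qed
        then have cov: "ball w \<rho> \<inter> E \<subseteq> (\<Union>y\<in>{w}. ball y s)" using s by auto
        have "1 * 1 \<le> C' * (\<rho> / s) powr lam" using C'pos pw1 by (intro mult_mono) auto
        then show ?thesis using cov w by (intro exI[of _ "{w}"]) auto
      next
        case False
        then have dpos: "0 < diameter E" using diameter_ge_0[OF bE] by simp
        define t where "t = diameter E / 2"
        have t: "0 < t" "t < diameter E" "t \<le> \<rho>" using dpos rd unfolding t_def by auto
        have Esub: "E \<subseteq> ball w (3 * t)"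
        proof
          fix z assume "z \<in> E" then have "dist w z \<le> diameter E" using dE[OF w] by simp
          then show "z \<in> ball w (3 * t)" using dpos unfolding t_def by simp
        qed
        obtain F1 where F1: "finite F1" "F1 \<subseteq> E" "ball w (3*t) \<inter> E \<subseteq> (\<Union>y\<in>F1. ball y t)"
          "real (card F1) \<le> (3 * (3*t) / t) ^ DIM('a)"
          using doubling[of t "3*t" E w] t by auto
        have cF1: "real (card F1) \<le> 9 ^ DIM('a)" using F1(4) t by simp
        have EF1: "E \<subseteq> (\<Union>y\<in>F1. ball y t)" using Esub F1(3) by blast
        show ?thesis
        proof (cases "s \<le> t")
          case True
          have Gex: "\<forall>u\<in>F1. \<exists>G. finite G \<and> G \<subseteq> E \<and> ball u t \<inter> E \<subseteq> (\<Union>y\<in>G. ball y s) \<and>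
             real (card G) \<le> C * (t / s) powr lam"
          proof
            fix u assume "u \<in> F1"
            then have "u \<in> E" using F1(2) by blast
            have "bounded E \<longrightarrow> t < diameter E" using t by blast
            show "\<exists>G. finite G \<and> G \<subseteq> E \<and> ball u t \<inter> E \<subseteq> (\<Union>y\<in>G. ball y s) \<and>
             real (card G) \<le> C * (t / s) powr lam"
              by (rule C[OF \<open>u \<in> E\<close> conjI[OF conjunct1[OF s] conjI[OF True \<open>bounded E \<longrightarrow> t < diameter E\<close>]]])
          qed
          obtain G where G0: "\<forall>u\<in>F1. finite (G u) \<and> G u \<subseteq> E \<and>
              ball u t \<inter> E \<subseteq> (\<Union>y\<in>G u. ball y s) \<and> real (card (G u)) \<le> C * (t / s) powr lam"
            using bchoice[OF Gex] by (elim exE) blast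
          have G: "finite (G u) \<and> G u \<subseteq> E \<and>
              ball u t \<inter> E \<subseteq> (\<Union>y\<in>G u. ball y s) \<and> real (card (G u)) \<le> C * (t / s) powr lam"
            if "u \<in> F1" for u using G0 that by (rule bspec)
          define F where "F = (\<Union>u\<in>F1. G u)"
          have fF: "finite F" unfolding F_def
            by (rule finite_UN_I[OF F1(1)]) (use G in blast)
          have FE: "F \<subseteq> E" unfolding F_def by (rule UN_least) (use G in blast)
          have cov: "ball w \<rho> \<inter> E \<subseteq> (\<Union>y\<in>F. ball y s)"
          proof
            fix z assume "z \<in> ball w \<rho> \<inter> E"
            then have "z \<in> E" by simp
            then obtain u where "u \<in> F1" "z \<in> ball u t" using EF1 by blast
            then have "z \<in> (\<Union>y\<in>G u. ball y s)" using G \<open>z \<in> E\<close> by blast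
            then show "z \<in> (\<Union>y\<in>F. ball y s)" using \<open>u \<in> F1\<close> unfolding F_def by blast
          qed
          have "real (card F) \<le> (\<Sum>u\<in>F1. real (card (G u)))"
          proof -
            have "card F \<le> (\<Sum>u\<in>F1. card (G u))" unfolding F_def by (rule card_UN_le[OF F1(1)])
            then have "real (card F) \<le> real (\<Sum>u\<in>F1. card (G u))" by (simp only: of_nat_le_iff)
            then show ?thesis by simp
          qed
          also have "\<dots> \<le> (\<Sum>u\<in>F1. C0 * (\<rho> / s) powr lam)"
          proof (intro sum_mono)
            fix u assume "u \<in> F1"
            have "(t / s) powr lam \<le> (\<rho> / s) powr lam"
              using t s lam by (intro powr_mono2) (auto simp: divide_right_mono)
            then have "C * (t / s) powr lam \<le> C0 * (\<rho> / s) powr lam"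
            proof -
              have "C * (t / s) powr lam \<le> C0 * (t / s) powr lam"
                using C0(1) by (intro mult_right_mono) auto
              also have "\<dots> \<le> C0 * (\<rho> / s) powr lam"
                using \<open>(t / s) powr lam \<le> (\<rho> / s) powr lam\<close> C0(2) by (rule mult_left_mono)
              finally show ?thesis .
            qed
            then show "real (card (G u)) \<le> C0 * (\<rho> / s) powr lam" using G[OF \<open>u \<in> F1\<close>] by linarith
          qed
          also have "\<dots> = real (card F1) * (C0 * (\<rho> / s) powr lam)" by simp
          also have "\<dots> \<le> 9 ^ DIM('a) * (C0 * (\<rho> / s) powr lam)"
            using cF1 C0 by (intro mult_right_mono) auto
          also have "\<dots> \<le> C' * (\<rho> / s) powr lam"
          proof -
            have z9: "0 \<le> (9::real) ^ DIM('a)" by simp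
            have "(9::real) ^ DIM('a) * (C0 + 1) = 9 ^ DIM('a) * C0 + 9 ^ DIM('a)"
              by (simp add: algebra_simps)
            then have "9 ^ DIM('a) * C0 \<le> C'" using C'pos(4) z9 by linarith
            then have "9 ^ DIM('a) * C0 * (\<rho> / s) powr lam \<le> C' * (\<rho> / s) powr lam"
              by (rule mult_right_mono) simp
            then show ?thesis by (simp add: mult.assoc)
          qed
          finally have cF: "real (card F) \<le> C' * (\<rho> / s) powr lam" .
          show ?thesis by (rule exI[of _ F], intro conjI fF FE cov cF)
        next
          case False
          have cov: "ball w \<rho> \<inter> E \<subseteq> (\<Union>y\<in>F1. ball y s)"
          proof
            fix z assume "z \<in> ball w \<rho> \<inter> E"
            then have "z \<in> (\<Union>y\<in>F1. ball y t)" using EF1 by blast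
            then obtain u where "u \<in> F1" "dist u z < t" by auto
            moreover from this(2) False have "dist u z < s" by linarith
            ultimately show "z \<in> (\<Union>y\<in>F1. ball y s)" by auto
          qed
          have "(9::real) ^ DIM('a) \<le> 9 ^ DIM('a) * (C0 + 1)"
            using C0 by (simp add: mult_le_cancel_left1)
          then have "real (card F1) \<le> C'" using cF1 C'pos(4) by linarith
          also have "\<dots> \<le> C' * (\<rho> / s) powr lam" using pw1 C'pos by simp
          finally have cF: "real (card F1) \<le> C' * (\<rho> / s) powr lam" .
          show ?thesis by (rule exI[of _ F1], intro conjI F1(1) F1(2) cov cF)
        qed
      qed
    qed
  qed
qed

lemma real_ineq:
  fixes s r lam q C' w N :: real and n :: nat
  assumes s: "0 < s" and r: "0 < r" and lam: "0 < lam" and q: "0 \<le> q" "lam < real n - q"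
    and C': "0 < C'" and w: "0 < w" and N: "0 \<le> N" "N \<le> C' * (2 * (r + s) / s) powr lam"
  shows "N * ((2 * s) ^ n * w) \<le> C' * 4 powr lam * 2 ^ n * w * s powr q * max s r powr (real n - q)"
proof -
  define m where "m = max s r"
  have m: "0 < m" "s \<le> m" "r \<le> m" unfolding m_def using s by auto
  have A: "(2 * (r + s) / s) powr lam \<le> (4 * m / s) powr lam"
    using s r m lam by (intro powr_mono2) (auto simp: divide_right_mono)
  have B: "(4 * m / s) powr lam = 4 powr lam * m powr lam / s powr lam"
    using s m by (simp add: powr_divide powr_mult)
  have Cc: "(2 * s) ^ n = 2 ^ n * s powr real n"
    using s by (simp add: power_mult_distrib powr_realpow)
  have D1: "s powr real n / s powr lam = s powr q * s powr (real n - lam - q)"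
    using s by (simp add: powr_add[symmetric] powr_diff[symmetric])
  have E1: "s powr (real n - lam - q) \<le> m powr (real n - lam - q)"
    using s m q by (intro powr_mono2) auto
  have F1: "m powr lam * m powr (real n - lam - q) = m powr (real n - q)"
    using m by (simp add: powr_add[symmetric])
  have "N * ((2 * s) ^ n * w) \<le> C' * (4 * m / s) powr lam * ((2 * s) ^ n * w)"
    using N A C' w s by (intro mult_right_mono) (auto intro: order.trans mult_left_mono)
  also have "\<dots> = C' * 4 powr lam * 2 ^ n * w * m powr lam * (s powr real n / s powr lam)"
    unfolding B Cc by (simp add: field_simps)
  also have "\<dots> = C' * 4 powr lam * 2 ^ n * w * s powr q * (m powr lam * s powr (real n - lam - q))"
    unfolding D1 by (simp add: field_simps)
  also have "\<dots> \<le> C' * 4 powr lam * 2 ^ n * w * s powr q * (m powr lam * m powr (real n - lam - q))"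
    using C' w E1 by (intro mult_left_mono) auto
  also have "\<dots> = C' * 4 powr lam * 2 ^ n * w * s powr q * m powr (real n - q)"
    unfolding F1 ..
  finally show ?thesis unfolding m_def .
qed

theorem proposition2p4:
  fixes D :: "'a::euclidean_space set" and \<kappa> R0 q :: real
  assumes fat: "kappa_fat \<kappa> R0 D"
    and ne: "frontier D \<noteq> {}"
    and dimA: "assouad_dim (frontier D) < real DIM('a)"
    and q: "0 \<le> q" "q < real DIM('a) - assouad_dim (frontier D)"
  shows "\<exists>C>0. \<forall>x\<in>closure D. \<forall>r s. 0 < r \<and> 0 < s \<longrightarrow>
           emeasure lebesgue {y \<in> ball x r \<inter> closure D. infdist y (frontier D) < s}
             \<le> ennreal (C * s powr q * (max s r) powr (real DIM('a) - q))"
proof -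
  define L where "L = {lam. lam > 0 \<and> assouad_cover (frontier D) lam}"
  have dL: "real DIM('a) \<in> L" unfolding L_def using cover_dim[of "frontier D"] by simp
  have bdd: "bdd_below L" unfolding L_def bdd_below_def by (intro exI[of _ 0]) auto
  have "Inf L < real DIM('a) - q" using q(2) unfolding assouad_dim_def L_def by linarith
  then obtain lam where lamL: "lam \<in> L" "lam < real DIM('a) - q"
    using cInf_lessD[of L] dL by blast
  then have lam: "0 < lam" "assouad_cover (frontier D) lam" by (auto simp: L_def)
  from global_cover[OF lam(2) lam(1)] obtain C' where C'pos: "C' > 0" and
    Cov: "\<forall>w\<in>frontier D. \<forall>s \<rho>. 0 < s \<and> s \<le> \<rho> \<longrightarrow>
     (\<exists>F. finite F \<and> F \<subseteq> frontier D \<and> ball w \<rho> \<inter> frontier D \<subseteq> (\<Union>y\<in>F. ball y s) \<and>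
          real (card F) \<le> C' * (\<rho> / s) powr lam)"
    by (elim exE conjE)
  define w where "w = omega TYPE('a)"
  have wpos: "0 < w" unfolding w_def by (rule omega_pos)
  define K where "K = C' * 4 powr lam * 2 ^ DIM('a) * w"
  have Kpos: "0 < K" unfolding K_def using C'pos wpos by simp
  have clE: "closed (frontier D)" by simp
  show ?thesis
  proof (intro exI[of _ K] conjI Kpos ballI allI impI)
    fix x and r s :: real assume x: "x \<in> closure D" and rs: "0 < r \<and> 0 < s"
    show "emeasure lebesgue {y \<in> ball x r \<inter> closure D. infdist y (frontier D) < s}
             \<le> ennreal (K * s powr q * (max s r) powr (real DIM('a) - q))"
      (is "emeasure lebesgue ?S \<le> _")
    proof (cases "?S = {}")
      case True then show ?thesis by (simp only: emeasure_empty zero_le)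
    next
      case False
      then obtain y0 where y0: "y0 \<in> ?S" by blast
      have near: "\<exists>z\<in>frontier D. dist y z < s" if "y \<in> ?S" for y
      proof -
        obtain z where "z \<in> frontier D" "infdist y (frontier D) = dist y z"
          using infdist_attains_inf[OF clE ne] by blast
        with that show ?thesis by auto
      qed
      obtain z0 where z0: "z0 \<in> frontier D" "dist y0 z0 < s" using near[OF y0] by blast
      define \<rho> where "\<rho> = 2 * (r + s)"
      have s\<rho>: "0 < s \<and> s \<le> \<rho>" using rs unfolding \<rho>_def by simp
      obtain F where F: "finite F" "F \<subseteq> frontier D"
        "ball z0 \<rho> \<inter> frontier D \<subseteq> (\<Union>y\<in>F. ball y s)"
        "real (card F) \<le> C' * (\<rho> / s) powr lam"
        using Cov[rule_format, OF z0(1) s\<rho>] by (elim exE conjE)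
      have sub: "?S \<subseteq> (\<Union>y\<in>F. ball y (2 * s))"
      proof
        fix y assume y: "y \<in> ?S"
        then have yx: "dist x y < r" by simp
        have y0x: "dist x y0 < r" using y0 by simp
        obtain z where z: "z \<in> frontier D" "dist y z < s" using near[OF y] by blast
        have t1: "dist z0 z \<le> dist z0 y0 + dist y0 z" by (rule dist_triangle)
        have t2: "dist y0 z \<le> dist y0 x + dist x z" by (rule dist_triangle)
        have t3: "dist x z \<le> dist x y + dist y z" by (rule dist_triangle)
        have t4: "dist z0 y0 = dist y0 z0" "dist y0 x = dist x y0" by (simp_all add: dist_commute)
        have "dist z0 z < 2 * r + 2 * s"
          using t1 t2 t3 t4 z0(2) z(2) yx y0x by linarith
        then have "dist z0 z < \<rho>" unfolding \<rho>_def by simp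
        then have "z \<in> ball z0 \<rho> \<inter> frontier D" using z by simp
        then have "z \<in> (\<Union>y\<in>F. ball y s)" using F(3) by blast
        then obtain u where u: "u \<in> F" "dist u z < s" by auto
        have "dist u y < 2 * s"
          using dist_triangle[of u y z] dist_commute[of y z] u(2) z(2) by linarith
        with u(1) show "y \<in> (\<Union>y\<in>F. ball y (2 * s))" by auto
      qed
      have "emeasure lebesgue ?S \<le> emeasure lebesgue (\<Union>y\<in>F. ball y (2 * s))"
        by (rule emeasure_mono[OF sub]) (auto intro!: sets.finite_UN F(1))
      also have "\<dots> \<le> (\<Sum>y\<in>F. emeasure lebesgue (ball y (2 * s)))"
        by (rule emeasure_subadditive_finite[OF F(1)]) auto
      also have "\<dots> = (\<Sum>y\<in>F. ennreal ((2 * s) ^ DIM('a) * w))"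
        using evol[where 'a='a, of "2 * s"] rs unfolding w_def by simp
      also have "\<dots> = ennreal (\<Sum>y\<in>F. (2 * s) ^ DIM('a) * w)"
        using rs wpos by (intro sum_ennreal) auto
      also have "\<dots> = ennreal (real (card F) * ((2 * s) ^ DIM('a) * w))" by simp
      also have "\<dots> \<le> ennreal (K * s powr q * (max s r) powr (real DIM('a) - q))"
        unfolding K_def
        by (rule ennreal_leI, rule real_ineq)
           (use rs lam q lamL C'pos wpos F(4) in \<open>auto simp: \<rho>_def\<close>)
      finally show ?thesis .
    qed
  qed
qed

end
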